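(* Let $N\ge 1$ and $n\ge 2N+2$ be integers, let $x\in\{0,1\}^N$ and $k^\star\in[N]$. Let $G$ be the graph on vertex set $P\cup U\cup W$ with $P=\{v_1,\dots,v_{n-2N}\}$, $U=\{u_1,\dots,u_N\}$, $W=\{w_1,\dots,w_N\}$ (so $n$ vertices), whose edges are: $v_iv_{i+1}$ for $1\le i<n-2N$; $u_iw_i$ for all $i\in[N]$; $v_1u_i$ for every $i$ with $x_i=1$; $v_1w_i$ for every $i\neq k^\star$; and $w_{k^\star}v_{n-2N}$. If $x_{k^\star}=1$ then the graphic TSP cost of $G$ is at most $n+2N$; if $x_{k^\star}=0$ then the graphic TSP cost of $G$ is at least $2n-N-1$.
   Context: For a connected unweighted undirected graph $G=(V,E)$ with $n\ge 2$ vertices, the graphic TSP cost is $\min \sum_{i=1}^{n} d_G(v_i,v_{i+1})$ over cyclic orderings $(v_1,\dots,v_n)$ of $V$ ($v_{n+1}=v_1$), where $d_G$ is shortest-path distance. *)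

theory Defs
  imports Main
begin

text \<open>An undirected graph is given by a vertex set V and a symmetric edge
predicate E.\<close>

definition walk :: "'a set \<Rightarrow> ('a \<Rightarrow> 'a \<Rightarrow> bool) \<Rightarrow> 'a list \<Rightarrow> bool" where
  "walk V E p \<longleftrightarrow> p \<noteq> [] \<and> set p \<subseteq> V \<and>
     (\<forall>i. Suc i < length p \<longrightarrow> E (p ! i) (p ! Suc i))"

definition gdist :: "'a set \<Rightarrow> ('a \<Rightarrow> 'a \<Rightarrow> bool) \<Rightarrow> 'a \<Rightarrow> 'a \<Rightarrow> nat" where
  "gdist V E a b = (LEAST k. \<exists>p. walk V E p \<and> hd p = a \<and> last p = b \<and> length p = Suc k)"

definition tour_cost :: "'a set \<Rightarrow> ('a \<Rightarrow> 'a \<Rightarrow> bool) \<Rightarrow> 'a list \<Rightarrow> nat" where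
  "tour_cost V E vs = (\<Sum>i<length vs. gdist V E (vs ! i) (vs ! ((Suc i) mod length vs)))"

definition graphic_tsp :: "'a set \<Rightarrow> ('a \<Rightarrow> 'a \<Rightarrow> bool) \<Rightarrow> nat" where
  "graphic_tsp V E = Min {tour_cost V E vs | vs. distinct vs \<and> set vs = V}"

datatype vtx = Pv nat | Uv nat | Wv nat

definition constr_V :: "nat \<Rightarrow> nat \<Rightarrow> vtx set" where
  "constr_V N n = {Pv i | i. 1 \<le> i \<and> i \<le> n - 2 * N}
                \<union> {Uv i | i. 1 \<le> i \<and> i \<le> N} \<union> {Wv i | i. 1 \<le> i \<and> i \<le> N}"

text \<open>x i = 1 encodes x_i = 1; k is k*.\<close>

definition constr_E0 :: "nat \<Rightarrow> nat \<Rightarrow> (nat \<Rightarrow> nat) \<Rightarrow> nat \<Rightarrow> vtx \<Rightarrow> vtx \<Rightarrow> bool" where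
  "constr_E0 N n x k a b \<longleftrightarrow>
     (\<exists>i. 1 \<le> i \<and> i < n - 2 * N \<and> a = Pv i \<and> b = Pv (Suc i))
   \<or> (\<exists>i. 1 \<le> i \<and> i \<le> N \<and> a = Uv i \<and> b = Wv i)
   \<or> (\<exists>i. 1 \<le> i \<and> i \<le> N \<and> x i = 1 \<and> a = Pv 1 \<and> b = Uv i)
   \<or> (\<exists>i. 1 \<le> i \<and> i \<le> N \<and> i \<noteq> k \<and> a = Pv 1 \<and> b = Wv i)
   \<or> (a = Wv k \<and> b = Pv (n - 2 * N))"

definition constr_E :: "nat \<Rightarrow> nat \<Rightarrow> (nat \<Rightarrow> nat) \<Rightarrow> nat \<Rightarrow> vtx \<Rightarrow> vtx \<Rightarrow> bool" where
  "constr_E N n x k a b \<longleftrightarrow> constr_E0 N n x k a b \<or> constr_E0 N n x k b a"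

end

theory Submission
  imports Defs
begin


lemma walk_Nil[simp]: "\<not> walk V E []" by (simp add: walk_def)
lemma walk_single[simp]: "walk V E [a] \<longleftrightarrow> a \<in> V" by (simp add: walk_def)

lemma all_nat_split: "(\<forall>i::nat. P i) \<longleftrightarrow> P 0 \<and> (\<forall>i. P (Suc i))"
  by (metis not0_implies_Suc)

lemma walk_set: "walk V E p \<Longrightarrow> x \<in> set p \<Longrightarrow> x \<in> V" by (auto simp: walk_def)
lemma walk_ne: "walk V E p \<Longrightarrow> p \<noteq> []" by (auto simp: walk_def)

lemma walk_Cons2[simp]: "walk V E (a#b#p) \<longleftrightarrow> a \<in> V \<and> E a b \<and> walk V E (b#p)"
  unfolding walk_def by (subst all_nat_split) auto

lemma walk_append:
  assumes "walk V E p" "walk V E q" "last p = hd q"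
  shows "walk V E (p @ tl q)"
  using assms
proof (induction p rule: induct_list012)
  case 1 then show ?case by simp
next
  case (2 a) then show ?case by (cases q) auto
next
  case (3 a b p) then show ?case by auto
qed

lemma last_append_tl: "p \<noteq> [] \<Longrightarrow> q \<noteq> [] \<Longrightarrow> last p = hd q \<Longrightarrow> last (p @ tl q) = last q"
  by (cases q) auto

lemma walk_rev:
  assumes sym: "\<And>a b. E a b \<Longrightarrow> E b a" and "walk V E p"
  shows "walk V E (rev p)"
  using assms(2)
proof (induction p rule: induct_list012)
  case 1 then show ?case by simp
next
  case (2 a) then show ?case by simp
next
  case (3 a b p)
  then have w: "walk V E (rev (b#p))" by simp
  have "walk V E [b, a]" using 3 sym walk_set[of V E "b#p" b] by auto
  from walk_append[OF w this] have "walk V E (rev (b#p) @ tl [b,a])" by simp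
  then show ?case by simp
qed

definition reach where "reach V E a b = (\<exists>p. walk V E p \<and> hd p = a \<and> last p = b)"

lemma reach_sym: "(\<And>a b. E a b \<Longrightarrow> E b a) \<Longrightarrow> reach V E a b \<Longrightarrow> reach V E b a"
  unfolding reach_def
  by (metis walk_rev walk_Nil hd_rev last_rev)

lemma reach_trans: "reach V E a b \<Longrightarrow> reach V E b c \<Longrightarrow> reach V E a c"
  unfolding reach_def
proof (elim exE conjE)
  fix p q assume "walk V E p" "hd p = a" "last p = b" "walk V E q" "hd q = b" "last q = c"
  then show "\<exists>p. walk V E p \<and> hd p = a \<and> last p = c"
    using walk_ne[of V E p] walk_ne[of V E q]
    by (intro exI[of _ "p @ tl q"]) (auto simp: walk_append last_append_tl)
qed

lemma gdist_le: "walk V E p \<Longrightarrow> hd p = a \<Longrightarrow> last p = b \<Longrightarrow> gdist V E a b \<le> length p - 1"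
  unfolding gdist_def
  by (rule Least_le) (rule exI[of _ p], cases p, auto)

lemma gdist_ex: "reach V E a b \<Longrightarrow> \<exists>p. walk V E p \<and> hd p = a \<and> last p = b \<and> length p = Suc (gdist V E a b)"
  unfolding gdist_def reach_def
proof (elim exE conjE)
  fix p assume "walk V E p" "hd p = a" "last p = b"
  then have "\<exists>k p. walk V E p \<and> hd p = a \<and> last p = b \<and> length p = Suc k"
    using walk_ne[of V E p] by (intro exI[of _ "length p - 1"] exI[of _ p]) auto
  then show "\<exists>pa. walk V E pa \<and> hd pa = a \<and> last pa = b \<and>
      length pa = Suc (LEAST k. \<exists>p. walk V E p \<and> hd p = a \<and> last p = b \<and> length p = Suc k)"
    by (rule LeastI_ex)
qed

fun pc :: "('a \<Rightarrow> 'a \<Rightarrow> nat) \<Rightarrow> 'a list \<Rightarrow> nat" where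
  "pc d [] = 0" | "pc d [a] = 0" | "pc d (a#b#r) = d a b + pc d (b#r)"

lemma pc_join: "pc d (xs @ y # ys) = pc d (xs @ [y]) + pc d (y # ys)"
  by (induction xs rule: induct_list012) auto

lemma pc_nth: "pc d xs = (\<Sum>i<length xs - 1. d (xs!i) (xs!Suc i))"
proof (induction xs rule: induct_list012)
  case (3 a b r)
  have "(\<Sum>i<length (a#b#r) - 1. d ((a#b#r)!i) ((a#b#r)!Suc i))
      = d a b + (\<Sum>i<length (b#r) - 1. d ((b#r)!i) ((b#r)!Suc i))"
    by (simp add: sum.lessThan_Suc_shift del: sum.lessThan_Suc)
  then show ?case using 3 by simp
qed auto

lemma pc_bound: "(\<And>i. Suc i < length xs \<Longrightarrow> d (xs!i) (xs!Suc i) \<le> c) \<Longrightarrow> pc d xs \<le> c * (length xs - 1)"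
  unfolding pc_nth
  by (rule order.trans[OF sum_mono[of _ _ "\<lambda>_. c"]]) auto

lemma tour_pc: "vs \<noteq> [] \<Longrightarrow> tour_cost V E vs = pc (gdist V E) (vs @ [hd vs])"
proof -
  assume ne: "vs \<noteq> []"
  let ?L = "length vs"
  have "pc (gdist V E) (vs @ [hd vs]) = (\<Sum>i<?L. gdist V E ((vs @ [hd vs])!i) ((vs @ [hd vs])!Suc i))"
    by (simp add: pc_nth)
  also have "\<dots> = (\<Sum>i<?L. gdist V E (vs ! i) (vs ! ((Suc i) mod ?L)))"
  proof (rule sum.cong)
    fix i assume "i \<in> {..<?L}"
    then have i: "i < ?L" by simp
    show "gdist V E ((vs @ [hd vs])!i) ((vs @ [hd vs])!Suc i) = gdist V E (vs ! i) (vs ! ((Suc i) mod ?L))"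
    proof (cases "Suc i < ?L")
      case True then show ?thesis using i by (simp add: nth_append)
    next
      case False then have "Suc i = ?L" using i by simp
      then show ?thesis using i ne by (simp add: nth_append hd_conv_nth)
    qed
  qed simp
  finally show ?thesis unfolding tour_cost_def by simp
qed

definition sep :: "'a set \<Rightarrow> 'a \<Rightarrow> 'a \<Rightarrow> nat" where
  "sep C a b = (if (a \<in> C) = (b \<in> C) then 0 else 1)"

lemma sep_tri: "sep C a c \<le> sep C a b + sep C b c" by (simp add: sep_def)

lemma sum_sep_tri: "(\<Sum>j\<in>J. sep (C j) a c) \<le> (\<Sum>j\<in>J. sep (C j) a b) + (\<Sum>j\<in>J. sep (C j) b c)"
  by (subst sum.distrib[symmetric]) (rule sum_mono, rule sep_tri)

lemma exit_index:
  assumes "ia < length vs" "vs!ia \<in> C" "ib < length vs" "vs!ib \<notin> C"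
  shows "\<exists>i<length vs. vs!i \<in> C \<and> vs!(Suc i mod length vs) \<notin> C"
proof (rule ccontr)
  let ?L = "length vs"
  assume "\<not> ?thesis"
  then have st: "\<And>i. i < ?L \<Longrightarrow> vs!i \<in> C \<Longrightarrow> vs!(Suc i mod ?L) \<in> C" by blast
  have "\<forall>t. vs!((ia+t) mod ?L) \<in> C"
  proof
    fix t show "vs!((ia+t) mod ?L) \<in> C"
    proof (induction t)
      case 0 then show ?case using assms by simp
    next
      case (Suc t)
      have L0: "0 < ?L" using assms(1) by (cases vs) auto
      have "vs!(Suc ((ia+t) mod ?L) mod ?L) \<in> C"
        using st[OF mod_less_divisor[OF L0] Suc] .
      then show ?case by (simp add: mod_Suc_eq)
    qed
  qed
  then have "vs!((ia + (?L - ia + ib)) mod ?L) \<in> C" by blast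
  moreover have "(ia + (?L - ia + ib)) mod ?L = ib" using assms by simp
  ultimately show False using assms by simp
qed

lemma sep_compl: "sep (-C) a b = sep C a b" by (simp add: sep_def)

lemma crossing:
  assumes "a \<in> set vs" "a \<in> C" "b \<in> set vs" "b \<notin> C"
  shows "2 \<le> (\<Sum>i<length vs. sep C (vs!i) (vs!(Suc i mod length vs)))"
proof -
  let ?L = "length vs"
  obtain ia ib where ia: "ia < ?L" "vs!ia = a" and ib: "ib < ?L" "vs!ib = b"
    using assms by (metis in_set_conv_nth)
  obtain i1 where i1: "i1 < ?L" "vs!i1 \<in> C" "vs!(Suc i1 mod ?L) \<notin> C"
    using exit_index[of ia vs C ib] ia ib assms by auto
  obtain i2 where i2: "i2 < ?L" "vs!i2 \<in> -C" "vs!(Suc i2 mod ?L) \<notin> -C"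
    using exit_index[of ib vs "-C" ia] ia ib assms by auto
  have ne: "i1 \<noteq> i2" using i1 i2 by auto
  have "2 = (\<Sum>i\<in>{i1,i2}. sep C (vs!i) (vs!(Suc i mod ?L)))"
    using ne i1 i2 by (simp add: sep_def)
  also have "\<dots> \<le> (\<Sum>i<?L. sep C (vs!i) (vs!(Suc i mod ?L)))"
    using i1 i2 by (intro sum_mono2) auto
  finally show ?thesis .
qed

lemma double_sum_bound:
  "(\<And>j. j \<in> J \<Longrightarrow> 2 \<le> (\<Sum>i<L. f j i)) \<Longrightarrow> 2 * card J \<le> (\<Sum>i<L. \<Sum>j\<in>J. f j i)"
proof -
  assume h: "\<And>j. j \<in> J \<Longrightarrow> 2 \<le> (\<Sum>i<L. f j i)"
  have "2 * card J = (\<Sum>j\<in>J. (2::nat))" by simp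
  also have "\<dots> \<le> (\<Sum>j\<in>J. \<Sum>i<L. f j i)" by (rule sum_mono) (rule h)
  also have "\<dots> = (\<Sum>i<L. \<Sum>j\<in>J. f j i)" by (rule sum.swap)
  finally show ?thesis .
qed



lemma V_Pv[simp]: "Pv i \<in> constr_V N n \<longleftrightarrow> 1 \<le> i \<and> i \<le> n - 2*N" by (auto simp: constr_V_def)
lemma V_Uv[simp]: "Uv i \<in> constr_V N n \<longleftrightarrow> 1 \<le> i \<and> i \<le> N" by (auto simp: constr_V_def)
lemma V_Wv[simp]: "Wv i \<in> constr_V N n \<longleftrightarrow> 1 \<le> i \<and> i \<le> N" by (auto simp: constr_V_def)

lemma E_sym: "constr_E N n x k a b \<Longrightarrow> constr_E N n x k b a" by (auto simp: constr_E_def)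

lemma E_path: "1 \<le> i \<Longrightarrow> i < n - 2*N \<Longrightarrow> constr_E N n x k (Pv i) (Pv (Suc i))"
  by (auto simp: constr_E_def constr_E0_def)
lemma E_UW: "1 \<le> i \<Longrightarrow> i \<le> N \<Longrightarrow> constr_E N n x k (Uv i) (Wv i)"
  by (auto simp: constr_E_def constr_E0_def)
lemma E_WU: "1 \<le> i \<Longrightarrow> i \<le> N \<Longrightarrow> constr_E N n x k (Wv i) (Uv i)"
  by (auto simp: constr_E_def constr_E0_def)
lemma E_PW: "1 \<le> i \<Longrightarrow> i \<le> N \<Longrightarrow> i \<noteq> k \<Longrightarrow> constr_E N n x k (Pv 1) (Wv i)"
  by (auto simp: constr_E_def constr_E0_def)
lemma E_WP: "1 \<le> i \<Longrightarrow> i \<le> N \<Longrightarrow> i \<noteq> k \<Longrightarrow> constr_E N n x k (Wv i) (Pv 1)"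
  by (auto simp: constr_E_def constr_E0_def)
lemma E_PU: "1 \<le> i \<Longrightarrow> i \<le> N \<Longrightarrow> x i = 1 \<Longrightarrow> constr_E N n x k (Pv 1) (Uv i)"
  by (auto simp: constr_E_def constr_E0_def)
lemma E_UP: "1 \<le> i \<Longrightarrow> i \<le> N \<Longrightarrow> x i = 1 \<Longrightarrow> constr_E N n x k (Uv i) (Pv 1)"
  by (auto simp: constr_E_def constr_E0_def)
lemma E_PmW: "constr_E N n x k (Pv (n - 2*N)) (Wv k)"
  by (auto simp: constr_E_def constr_E0_def)
lemma E_WPm: "constr_E N n x k (Wv k) (Pv (n - 2*N))"
  by (auto simp: constr_E_def constr_E0_def)

context
  fixes N n k :: nat and x :: "nat \<Rightarrow> nat"
  assumes N1: "N \<ge> 1" and nN: "n \<ge> 2*N+2" and kN: "k \<in> {1..N}"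
begin

lemma m2: "n - 2*N \<ge> 2" using nN by simp

lemma path_walk: "1 \<le> j \<Longrightarrow> j \<le> n - 2*N \<Longrightarrow> walk (constr_V N n) (constr_E N n x k) (map Pv [1..<j+1])"
proof -
  assume j: "1 \<le> j" "j \<le> n - 2*N"
  have "\<forall>i. Suc i < length (map Pv [1..<j+1]) \<longrightarrow>
     constr_E N n x k (map Pv [1..<j+1] ! i) (map Pv [1..<j+1] ! Suc i)"
  proof (intro allI impI)
    fix i assume "Suc i < length (map Pv [1..<j+1])"
    then have i: "Suc i < j" by (simp del: upt_Suc)
    then have "map Pv [1..<j+1] ! i = Pv (Suc i)" "map Pv [1..<j+1] ! Suc i = Pv (Suc (Suc i))"
      by (simp_all add: nth_upt del: upt_Suc)
    then show "constr_E N n x k (map Pv [1..<j+1] ! i) (map Pv [1..<j+1] ! Suc i)"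
      using E_path[of "Suc i" n N x k] i j by simp
  qed
  moreover have "set (map Pv [1..<j+1]) \<subseteq> constr_V N n" using j by auto
  moreover have "map Pv [1..<j+1] \<noteq> []" using j by simp
  ultimately show ?thesis unfolding walk_def by blast
qed

lemma path_hd: "1 \<le> j \<Longrightarrow> hd (map Pv [1..<j+1]) = Pv 1" by (simp add: upt_rec)
lemma path_last: "1 \<le> j \<Longrightarrow> last (map Pv [1..<j+1]) = Pv j" by simp

lemma reach_P1: "a \<in> constr_V N n \<Longrightarrow> reach (constr_V N n) (constr_E N n x k) (Pv 1) a"
proof -
  let ?V = "constr_V N n" and ?E = "constr_E N n x k" and ?m = "n - 2*N"
  assume a: "a \<in> ?V"
  have pm: "reach ?V ?E (Pv 1) (Pv j)" if "1 \<le> j" "j \<le> ?m" for j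
    unfolding reach_def using that path_walk path_hd path_last by blast
  have wk: "reach ?V ?E (Pv 1) (Wv k)"
  proof -
    have "reach ?V ?E (Pv ?m) (Wv k)" unfolding reach_def
      using kN E_PmW m2 by (intro exI[of _ "[Pv ?m, Wv k]"]) auto
    then show ?thesis using m2 by (intro reach_trans[OF pm[of ?m]]) auto
  qed
  show ?thesis
  proof (cases a)
    case (Pv j) then show ?thesis using a pm by simp
  next
    case (Wv i) show ?thesis
    proof (cases "i = k")
      case True then show ?thesis using Wv wk by simp
    next
      case False then show ?thesis unfolding reach_def using Wv a m2
        using E_PW[of i N k n x] by (intro exI[of _ "[Pv 1, Wv i]"]) simp
    qed
  next
    case (Uv i)
    have r1: "reach ?V ?E (Wv i) (Uv i)" unfolding reach_def using Uv a
      by (intro exI[of _ "[Wv i, Uv i]"]) (auto intro: E_WU)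
    have r2: "reach ?V ?E (Pv 1) (Wv i)"
    proof (cases "i = k")
      case True then show ?thesis using wk by simp
    next
      case False then show ?thesis unfolding reach_def using Uv a m2
        using E_PW[of i N k n x] by (intro exI[of _ "[Pv 1, Wv i]"]) simp
    qed
    show ?thesis using reach_trans[OF r2 r1] Uv by simp
  qed
qed

lemma reach_all: "a \<in> constr_V N n \<Longrightarrow> b \<in> constr_V N n \<Longrightarrow> reach (constr_V N n) (constr_E N n x k) a b"
proof -
  assume a: "a \<in> constr_V N n" and b: "b \<in> constr_V N n"
  have "reach (constr_V N n) (constr_E N n x k) a (Pv 1)"
    by (rule reach_sym[OF E_sym reach_P1[OF a]])
  then show ?thesis by (rule reach_trans[OF _ reach_P1[OF b]])
qed

end


definition posv :: "nat \<Rightarrow> nat \<Rightarrow> vtx \<Rightarrow> nat" where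
  "posv m k v = (case v of Pv i \<Rightarrow> i | Uv i \<Rightarrow> if i = k then m else 1 | Wv i \<Rightarrow> if i = k then m else 1)"

lemma posv_simps[simp]: "posv m k (Pv i) = i" "posv m k (Uv i) = (if i = k then m else 1)"
  "posv m k (Wv i) = (if i = k then m else 1)" by (simp_all add: posv_def)

definition hh :: "nat \<Rightarrow> nat \<Rightarrow> nat \<Rightarrow> vtx \<Rightarrow> vtx \<Rightarrow> nat" where
  "hh m N k a b = 2 * (\<Sum>j\<in>{1..<m}. sep {v. posv m k v \<le> j} a b)
     + 2 * sep {Uv k, Wv k} a b + 2 * sep {Uv k} a b
     + (\<Sum>i\<in>{1..N}-{k}. sep {Uv i} a b) + (\<Sum>i\<in>{1..N}-{k}. sep {Wv i} a b)
     + (\<Sum>i\<in>{1..N}-{k}. sep {Uv i, Wv i} a b)"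

lemma hh_tri: "hh m N k a c \<le> hh m N k a b + hh m N k b c"
proof -
  note t = sum_sep_tri[where J="{1..<m}" and C="\<lambda>j. {v. posv m k v \<le> j}" and a=a and c=c and b=b]
    sum_sep_tri[where J="{1..N}-{k}" and C="\<lambda>i. {Uv i}" and a=a and c=c and b=b]
    sum_sep_tri[where J="{1..N}-{k}" and C="\<lambda>i. {Wv i}" and a=a and c=c and b=b]
    sum_sep_tri[where J="{1..N}-{k}" and C="\<lambda>i. {Uv i, Wv i}" and a=a and c=c and b=b]
    sep_tri[where C="{Uv k, Wv k}" and a=a and c=c and b=b] sep_tri[where C="{Uv k}" and a=a and c=c and b=b]
  show ?thesis unfolding hh_def using t by linarith
qed

lemma sep_refl[simp]: "sep C a a = 0" by (simp add: sep_def)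
lemma sep_sym: "sep C a b = sep C b a" by (simp add: sep_def)

lemma hh_refl[simp]: "hh m N k a a = 0" by (simp add: hh_def)
lemma hh_sym: "hh m N k a b = hh m N k b a" by (simp add: hh_def sep_sym)

lemma path_sum: "1 \<le> i \<Longrightarrow> i < m \<Longrightarrow> (\<Sum>j\<in>{1..<m}. sep {v. posv m k v \<le> j} (Pv i) (Pv (Suc i))) = 1"
proof -
  assume i: "1 \<le> i" "i < m"
  have "(\<Sum>j\<in>{1..<m}. sep {v. posv m k v \<le> j} (Pv i) (Pv (Suc i))) = (\<Sum>j\<in>{1..<m}. if j = i then 1 else 0)"
    by (rule sum.cong) (auto simp: sep_def)
  also have "\<dots> = 1" using i by simp
  finally show ?thesis .
qed

lemma path_sum0: "posv m k a = posv m k b \<Longrightarrow> (\<Sum>j\<in>J. sep {v. posv m k v \<le> j} a b) = 0"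
  by (simp add: sep_def)

lemma if_neq_swap: "(if a \<noteq> b then x else y) = (if a = b then y else x)" by simp

context
  fixes N n k :: nat and x :: "nat \<Rightarrow> nat"
  assumes N1: "N \<ge> 1" and nN: "n \<ge> 2*N+2" and kN: "k \<in> {1..N}" and xk: "x k = 0"
begin

lemma hh_E0: "constr_E0 N n x k a b \<Longrightarrow> hh (n - 2*N) N k a b \<le> 2"
  unfolding constr_E0_def
proof (elim disjE exE conjE)
  fix i assume i: "1 \<le> i" "i < n - 2*N" "a = Pv i" "b = Pv (Suc i)"
  then show ?thesis using path_sum[OF i(1,2), of k]
    by (simp add: hh_def sep_def)
next
  fix i assume i: "1 \<le> i" "i \<le> N" "a = Uv i" "b = Wv i"
  then show ?thesis by (auto simp add: hh_def sep_def if_neq_swap)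
next
  fix i assume i: "1 \<le> i" "i \<le> N" "x i = 1" "a = Pv 1" "b = Uv i"
  then have "i \<noteq> k" using xk by auto
  then show ?thesis using i by (auto simp add: hh_def sep_def if_neq_swap)
next
  fix i assume i: "1 \<le> i" "i \<le> N" "i \<noteq> k" "a = Pv 1" "b = Wv i"
  then show ?thesis by (auto simp add: hh_def sep_def if_neq_swap)
next
  assume "a = Wv k" "b = Pv (n - 2*N)"
  then show ?thesis by (auto simp add: hh_def sep_def if_neq_swap)
qed

lemma hh_E: "constr_E N n x k a b \<Longrightarrow> hh (n - 2*N) N k a b \<le> 2"
  unfolding constr_E_def using hh_E0 hh_sym by metis

lemma hh_walk: "walk (constr_V N n) (constr_E N n x k) p \<Longrightarrow>
   hh (n - 2*N) N k (hd p) (last p) \<le> 2 * (length p - 1)"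
proof (induction p rule: induct_list012)
  case (3 a b p)
  have e: "hh (n - 2*N) N k a b \<le> 2" using 3 hh_E by simp
  have "hh (n - 2*N) N k b (last (b#p)) \<le> 2 * (length (b#p) - 1)" using 3 by simp
  then show ?case using e hh_tri[of "n - 2*N" N k a "last (b#p)" b] by simp
qed auto

lemma hh_gdist: "a \<in> constr_V N n \<Longrightarrow> b \<in> constr_V N n \<Longrightarrow>
   hh (n - 2*N) N k a b \<le> 2 * gdist (constr_V N n) (constr_E N n x k) a b"
proof -
  assume a: "a \<in> constr_V N n" and b: "b \<in> constr_V N n"
  obtain p where p: "walk (constr_V N n) (constr_E N n x k) p" "hd p = a" "last p = b"
     "length p = Suc (gdist (constr_V N n) (constr_E N n x k) a b)"
    using gdist_ex[OF reach_all[OF N1 nN kN a b]] by blast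
  show ?thesis using hh_walk[OF p(1)] p by simp
qed

lemma tour_lower:
  assumes d: "distinct vs" and sv: "set vs = constr_V N n"
  shows "2 * n - N - 1 \<le> tour_cost (constr_V N n) (constr_E N n x k) vs"
proof -
  let ?V = "constr_V N n" and ?E = "constr_E N n x k" and ?m = "n - 2*N"
  let ?L = "length vs"
  let ?I = "{1..N} - {k}"
  define nx where "nx i = vs ! (Suc i mod ?L)" for i
  have m2: "?m \<ge> 2" using nN by simp
  have P1: "Pv 1 \<in> set vs" using sv m2 by simp
  have ne: "vs \<noteq> []" using P1 by auto
  have inV: "vs ! i \<in> ?V" "nx i \<in> ?V" if "i < ?L" for i
  proof -
    have L0: "0 < ?L" using ne by simp
    have "vs ! i \<in> set vs" using that by (rule nth_mem)
    then show "vs ! i \<in> ?V" using sv by blast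
    have "nx i \<in> set vs" unfolding nx_def by (rule nth_mem, rule mod_less_divisor[OF L0])
    then show "nx i \<in> ?V" using sv by blast
  qed
  have "(\<Sum>i<?L. hh ?m N k (vs!i) (nx i)) \<le> (\<Sum>i<?L. 2 * gdist ?V ?E (vs!i) (nx i))"
  proof (rule sum_mono)
    fix i assume "i \<in> {..<?L}"
    then have "i < ?L" by simp
    then show "hh ?m N k (vs!i) (nx i) \<le> 2 * gdist ?V ?E (vs!i) (nx i)"
      by (intro hh_gdist inV)
  qed
  also have "\<dots> = 2 * tour_cost ?V ?E vs"
    by (simp add: tour_cost_def nx_def sum_distrib_left)
  finally have up: "(\<Sum>i<?L. hh ?m N k (vs!i) (nx i)) \<le> 2 * tour_cost ?V ?E vs" .
  have expand: "(\<Sum>i<?L. hh ?m N k (vs!i) (nx i)) =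
      2 * (\<Sum>i<?L. \<Sum>j\<in>{1..<?m}. sep {v. posv ?m k v \<le> j} (vs!i) (nx i))
    + 2 * (\<Sum>i<?L. sep {Uv k, Wv k} (vs!i) (nx i))
    + 2 * (\<Sum>i<?L. sep {Uv k} (vs!i) (nx i))
    + (\<Sum>i<?L. \<Sum>j\<in>?I. sep {Uv j} (vs!i) (nx i))
    + (\<Sum>i<?L. \<Sum>j\<in>?I. sep {Wv j} (vs!i) (nx i))
    + (\<Sum>i<?L. \<Sum>j\<in>?I. sep {Uv j, Wv j} (vs!i) (nx i))"
    by (simp add: hh_def sum.distrib sum_distrib_left)
  have cr: "2 \<le> (\<Sum>i<?L. sep C (vs!i) (nx i))" if "a \<in> ?V" "a \<in> C" "b \<in> ?V" "b \<notin> C" for a b C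
    unfolding nx_def using crossing[of a vs C b] that sv by simp
  have kk: "1 \<le> k" "k \<le> N" using kN by auto
  have A: "2 * card {1..<?m} \<le> (\<Sum>i<?L. \<Sum>j\<in>{1..<?m}. sep {v. posv ?m k v \<le> j} (vs!i) (nx i))"
    by (rule double_sum_bound, rule cr[of "Pv 1" _ "Pv ?m"]) (use m2 in auto)
  have B: "2 \<le> (\<Sum>i<?L. sep {Uv k, Wv k} (vs!i) (nx i))"
    by (rule cr[of "Wv k" _ "Pv 1"]) (use m2 kk in auto)
  have C: "2 \<le> (\<Sum>i<?L. sep {Uv k} (vs!i) (nx i))"
    by (rule cr[of "Uv k" _ "Pv 1"]) (use m2 kk in auto)
  have D: "2 * card ?I \<le> (\<Sum>i<?L. \<Sum>j\<in>?I. sep {Uv j} (vs!i) (nx i))"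
    by (rule double_sum_bound, rule cr[of "Uv _" _ "Pv 1"]) (use m2 in auto)
  have E: "2 * card ?I \<le> (\<Sum>i<?L. \<Sum>j\<in>?I. sep {Wv j} (vs!i) (nx i))"
    by (rule double_sum_bound, rule cr[of "Wv _" _ "Pv 1"]) (use m2 in auto)
  have F: "2 * card ?I \<le> (\<Sum>i<?L. \<Sum>j\<in>?I. sep {Uv j, Wv j} (vs!i) (nx i))"
    by (rule double_sum_bound, rule cr[of "Uv _" _ "Pv 1"]) (use m2 in auto)
  have cI: "card ?I = N - 1" using kN by (simp add: card_Diff_singleton)
  have cm: "card {1..<?m} = ?m - 1" by simp
  show ?thesis using up expand A B C D E F cI cm m2 N1 nN by linarith
qed

end



lemma gdist_edge: "a \<in> V \<Longrightarrow> b \<in> V \<Longrightarrow> E a b \<Longrightarrow> gdist V E a b \<le> 1"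
  using gdist_le[of V E "[a,b]" a b] by simp

lemma concat_pairs_distinct: "distinct L \<Longrightarrow> distinct (concat (map (\<lambda>i. [Wv i, Uv i]) L))"
  by (induction L) auto

lemma finite_V: "finite (constr_V N n)"
proof -
  have "constr_V N n \<subseteq> Pv ` {1..n - 2*N} \<union> Uv ` {1..N} \<union> Wv ` {1..N}"
    by (auto simp: constr_V_def)
  then show ?thesis by (rule finite_subset) auto
qed

lemma finite_costs: "finite {tour_cost V E vs | vs. distinct vs \<and> set vs = V}" if "finite V"
proof -
  have "{tour_cost V E vs | vs. distinct vs \<and> set vs = V} \<subseteq> tour_cost V E ` {xs. set xs \<subseteq> V \<and> distinct xs}"
    by auto
  then show ?thesis using finite_subset_distinct[OF that] finite_subset by blast
qed

context
  fixes N n k :: nat and x :: "nat \<Rightarrow> nat"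
  assumes N1: "N \<ge> 1" and nN: "n \<ge> 2*N+2" and kN: "k \<in> {1..N}" and xk: "x k = 1"
begin

abbreviation "VV \<equiv> constr_V N n"
abbreviation "EE \<equiv> constr_E N n x k"
abbreviation "dd \<equiv> gdist VV EE"

lemma d_UP: "s \<in> {1..N} \<Longrightarrow> dd (Uv s) (Pv 1) \<le> 2"
proof -
  assume s: "s \<in> {1..N}"
  show ?thesis
  proof (cases "s = k")
    case True
    have "Suc 0 \<le> n - 2*N" using nN by simp
    then show ?thesis using gdist_edge[of "Uv s" VV "Pv 1" EE] E_UP[of s N x n k] True s xk by auto
  next
    case False
    have "walk VV EE [Uv s, Wv s, Pv 1]" using False s nN E_UW[of s N n x k] E_WP[of s N k n x] by auto
    then show ?thesis using gdist_le[of VV EE "[Uv s, Wv s, Pv 1]" "Uv s" "Pv 1"] by simp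
  qed
qed

lemma d_UW: "s \<in> {1..N} \<Longrightarrow> i \<in> {1..N} \<Longrightarrow> i \<noteq> k \<Longrightarrow> dd (Uv s) (Wv i) \<le> 3"
proof -
  assume s: "s \<in> {1..N}" and i: "i \<in> {1..N}" "i \<noteq> k"
  have ew: "EE (Pv 1) (Wv i)" using E_PW[of i N k n x] i by auto
  show ?thesis
  proof (cases "s = k")
    case True
    have "walk VV EE [Uv s, Pv 1, Wv i]" using True s i nN E_UP[of s N x n k] xk ew by auto
    then show ?thesis using gdist_le[of VV EE "[Uv s, Pv 1, Wv i]" "Uv s" "Wv i"] by simp
  next
    case False
    have "walk VV EE [Uv s, Wv s, Pv 1, Wv i]" using False s i nN E_UW[of s N n x k] E_WP[of s N k n x] ew by auto
    then show ?thesis using gdist_le[of VV EE "[Uv s, Wv s, Pv 1, Wv i]" "Uv s" "Wv i"] by simp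
  qed
qed

lemma d_WU: "i \<in> {1..N} \<Longrightarrow> dd (Wv i) (Uv i) \<le> 1"
  using gdist_edge[of "Wv i" VV "Uv i" EE] E_WU[of i N n x k] by auto

lemma tail_cost: "s \<in> {1..N} \<Longrightarrow> set L \<subseteq> {1..N} - {k} \<Longrightarrow>
    pc dd (Uv s # concat (map (\<lambda>i. [Wv i, Uv i]) L) @ [Pv 1]) \<le> 4 * length L + 3"
proof (induction L arbitrary: s)
  case Nil then show ?case using d_UP[of s] by simp
next
  case (Cons i L)
  have i: "i \<in> {1..N}" "i \<noteq> k" using Cons by auto
  have "pc dd (Uv i # concat (map (\<lambda>i. [Wv i, Uv i]) L) @ [Pv 1]) \<le> 4 * length L + 3"
    using Cons i by auto
  then show ?case using d_UW[OF Cons.prems(1) i] d_WU[OF i(1)] by simp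
qed

lemma head_cost: "pc dd (map Pv [1..<(n-2*N)+1] @ [Wv k, Uv k]) \<le> (n - 2*N) + 1"
proof -
  let ?m = "n - 2*N"
  let ?xs = "map Pv [1..<?m+1] @ [Wv k, Uv k]"
  have m2: "?m \<ge> 2" using nN by simp
  have kk: "1 \<le> k" "k \<le> N" using kN by auto
  have "pc dd ?xs \<le> 1 * (length ?xs - 1)"
  proof (rule pc_bound)
    fix i assume "Suc i < length ?xs"
    then have i: "Suc i < ?m + 2" by (simp del: upt_Suc)
    show "dd (?xs!i) (?xs!Suc i) \<le> 1"
    proof (cases "Suc i < ?m")
      case True
      then have "?xs!i = Pv (Suc i)" "?xs!Suc i = Pv (Suc (Suc i))"
        by (simp_all add: nth_append nth_upt del: upt_Suc)
      then show ?thesis using gdist_edge[of "Pv (Suc i)" VV "Pv (Suc (Suc i))" EE] E_path[of "Suc i" n N x k] True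
        by simp
    next
      case False
      show ?thesis
      proof (cases "Suc i = ?m")
        case True
        then have "?xs!i = Pv ?m" "?xs!Suc i = Wv k"
          by (simp_all add: nth_append nth_upt del: upt_Suc)
        then show ?thesis using gdist_edge[of "Pv ?m" VV "Wv k" EE] E_PmW m2 kk by simp
      next
        case False2: False
        then have "Suc i = ?m + 1" using i False by simp
        then have "?xs!i = Wv k" "?xs!Suc i = Uv k"
          by (simp_all add: nth_append nth_upt del: upt_Suc)
        then show ?thesis using d_WU[of k] kN by simp
      qed
    qed
  qed
  then show ?thesis by (simp del: upt_Suc)
qed

lemma tour_upper: "graphic_tsp VV EE \<le> n + 2 * N"
proof -
  let ?m = "n - 2*N"
  define L where "L = filter (\<lambda>i. i \<noteq> k) [1..<N+1]"
  define vs where "vs = map Pv [1..<?m+1] @ Wv k # Uv k # concat (map (\<lambda>i. [Wv i, Uv i]) L)"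
  have m2: "?m \<ge> 2" using nN by simp
  have kk: "1 \<le> k" "k \<le> N" using kN by auto
  have setL: "set L = {1..N} - {k}" unfolding L_def by auto
  have lenL: "length L = N - 1"
  proof -
    have "distinct L" unfolding L_def by simp
    then have "length L = card (set L)" by (simp add: distinct_card)
    then show ?thesis using setL kN by (simp add: card_Diff_singleton)
  qed
  have dist: "distinct vs" unfolding vs_def
    using concat_pairs_distinct[of L] setL by (auto simp: L_def distinct_map inj_on_def)
  have setv: "set vs = VV" unfolding vs_def using setL kk m2
    by (auto simp: constr_V_def)
  have hd: "hd vs = Pv 1" unfolding vs_def using m2 by (simp add: upt_conv_Cons del: upt_Suc)
  have eq: "vs @ [hd vs] = (map Pv [1..<?m+1] @ [Wv k]) @ Uv k # (concat (map (\<lambda>i. [Wv i, Uv i]) L) @ [Pv 1])"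
    unfolding vs_def hd[unfolded vs_def] by simp
  have "pc dd (vs @ [hd vs]) = pc dd (map Pv [1..<?m+1] @ [Wv k, Uv k]) + pc dd (Uv k # concat (map (\<lambda>i. [Wv i, Uv i]) L) @ [Pv 1])"
    unfolding eq pc_join[of dd "map Pv [1..<?m+1] @ [Wv k]" "Uv k" "concat (map (\<lambda>i. [Wv i, Uv i]) L) @ [Pv 1]"]
    by (simp del: upt_Suc)
  also have "\<dots> \<le> (?m + 1) + (4 * length L + 3)"
    using head_cost tail_cost[of k L] kN setL by (intro add_mono) auto
  finally have "tour_cost VV EE vs \<le> n + 2 * N"
    using tour_pc[of vs VV EE] hd lenL N1 nN unfolding vs_def by (simp del: upt_Suc)
  moreover have "tour_cost VV EE vs \<in> {tour_cost VV EE vs | vs. distinct vs \<and> set vs = VV}"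
    using dist setv by blast
  ultimately show ?thesis unfolding graphic_tsp_def
    using finite_costs[OF finite_V] by (meson Min_le order.trans)
qed

end

theorem mainTheorem20:
  fixes N n k :: nat and x :: "nat \<Rightarrow> nat"
  assumes "N \<ge> 1" and "n \<ge> 2 * N + 2"
    and "\<forall>i\<in>{1..N}. x i \<in> {0, 1}"
    and "k \<in> {1..N}"
  shows "(x k = 1 \<longrightarrow> graphic_tsp (constr_V N n) (constr_E N n x k) \<le> n + 2 * N)
       \<and> (x k = 0 \<longrightarrow> graphic_tsp (constr_V N n) (constr_E N n x k) \<ge> 2 * n - N - 1)"
proof (intro conjI impI)
  assume "x k = 1"
  then show "graphic_tsp (constr_V N n) (constr_E N n x k) \<le> n + 2 * N"
    using tour_upper[of N n k x] assms by simp
next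
  assume xk: "x k = 0"
  let ?S = "{tour_cost (constr_V N n) (constr_E N n x k) vs | vs. distinct vs \<and> set vs = constr_V N n}"
  have fin: "finite ?S" by (rule finite_costs[OF finite_V])
  obtain vs where "set vs = constr_V N n" "distinct vs" using finite_distinct_list[OF finite_V] by blast
  then have ne: "?S \<noteq> {}" by blast
  have "\<forall>a\<in>?S. 2 * n - N - 1 \<le> a"
    using tour_lower[of N n k x] assms xk by blast
  then show "graphic_tsp (constr_V N n) (constr_E N n x k) \<ge> 2 * n - N - 1"
    unfolding graphic_tsp_def using Min_ge_iff[OF fin ne] by blast
qed

end
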